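(* Let $H\in\mathbb{R}^{d\times d}$ be symmetric positive definite, $q\in\mathbb{R}^d$ and $\theta_*=H^{-1}q$. For each $n\ge 1$ let $P_n,Q_n,R_n\in\mathbb{R}[X]$ be polynomials, and set $A_n=P_n(H)$, $B_n=Q_n(H)$, $c_n=R_n(H)q$. Assume: (i) ($\theta_*$-stationarity) $\theta_*=A_n\theta_*+B_n\theta_*+c_n$ for all $n\ge 1$; (ii) ($n$-scalability) there exist matrices $A,B\in\mathbb{R}^{d\times d}$ such that $A_n=\frac{n}{n+1}A$ and $B_n=\frac{n-1}{n+1}B$ for all $n\ge 1$. Then there exist polynomials $\bar A,\bar B\in\mathbb{R}[X]$ such that for all $n\ge1$: $$A_n=\frac{2n}{n+1}\Big(I-\frac{\bar A(H)+\bar B(H)}{2}H\Big),\qquad B_n=-\frac{n-1}{n+1}\big(I-\bar B(H)H\big),\qquad c_n=\frac{n\bar A(H)+\bar B(H)}{n+1}\,q.$$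
   Context: These matrices define the second-order iterative algorithm $\theta_{n+1}=A_n\theta_n+B_n\theta_{n-1}+c_n$ (with $\theta_1=\theta_0\in\mathbb{R}^d$) for minimizing $f(\theta)=\frac12\langle\theta,H\theta\rangle-\langle q,\theta\rangle$, whose minimizer is $\theta_*=H^{-1}q$. *)

theory Defs
  imports "HOL-Analysis.Analysis" "HOL-Computational_Algebra.Polynomial"
begin

fun mat_pow :: "real^'n^'n \<Rightarrow> nat \<Rightarrow> real^'n^'n" where
  "mat_pow A 0 = mat 1"
| "mat_pow A (Suc k) = A ** mat_pow A k"

definition poly_mat :: "real poly \<Rightarrow> real^'n^'n \<Rightarrow> real^'n^'n" where
  "poly_mat p A = (\<Sum>i\<le>degree p. coeff p i *\<^sub>R mat_pow A i)"

definition sym_pos_def :: "real^'n^'n \<Rightarrow> bool" where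
  "sym_pos_def H \<longleftrightarrow> transpose H = H \<and> (\<forall>x. x \<noteq> 0 \<longrightarrow> x \<bullet> (H *v x) > 0)"

end

theory Submission
  imports Defs
begin

lemma msr: "(A::real^'n^'m) ** (c *\<^sub>R B) = c *\<^sub>R (A ** B)"
  by (simp add: matrix_matrix_mult_def vec_eq_iff sum_distrib_left algebra_simps)
lemma msl: "(c *\<^sub>R (A::real^'n^'n)) ** B = c *\<^sub>R (A ** B)"
  by (simp add: matrix_matrix_mult_def vec_eq_iff sum_distrib_left algebra_simps)
lemma madd_r: "((A::real^'n^'n) + B) ** C = A ** C + B ** C"
  by (simp add: matrix_matrix_mult_def vec_eq_iff sum.distrib algebra_simps)

lemma lin_left: "linear (\<lambda>M::real^'n^'n. (A::real^'n^'n) ** M)"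
  by (rule linearI) (simp_all add: matrix_add_ldistrib msr)
lemma lin_right: "linear (\<lambda>M::real^'n^'n. M ** (A::real^'n^'n))"
  by (rule linearI) (simp_all add: madd_r msl)

lemma mat_pow_comm: "A ** mat_pow A k = mat_pow A k ** A"
  by (induction k) (simp_all add: matrix_mul_assoc)

lemma poly_mat_eq:
  assumes "degree p \<le> N"
  shows "poly_mat p A = (\<Sum>i\<le>N. coeff p i *\<^sub>R mat_pow A i)"
  unfolding poly_mat_def
  by (rule sum.mono_neutral_left) (use assms in \<open>auto intro!: coeff_eq_0 simp: not_le\<close>)

lemma poly_mat_add: "poly_mat (p + q) A = poly_mat p A + poly_mat q A"
proof -
  let ?N = "max (degree p) (degree q)"
  have "degree (p+q) \<le> ?N" by (rule degree_add_le) auto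
  then show ?thesis
    by (simp add: poly_mat_eq[of _ ?N] scaleR_add_left sum.distrib)
qed

lemma poly_mat_smult: "poly_mat (smult c p) A = c *\<^sub>R poly_mat p A"
  by (simp add: poly_mat_eq[of _ "degree p"] scaleR_sum_right)

lemma poly_mat_diff: "poly_mat (p - q) A = poly_mat p A - poly_mat q A"
proof -
  have "poly_mat (p - q) A + poly_mat q A = poly_mat p A"
    by (metis diff_add_cancel poly_mat_add)
  then show ?thesis by (metis add_diff_cancel)
qed

lemma poly_mat_1: "poly_mat 1 A = mat 1"
  by (simp add: poly_mat_def)

lemma poly_mat_const: "poly_mat [:c:] A = c *\<^sub>R mat 1"
  by (simp add: poly_mat_def)

lemma poly_mat_0: "poly_mat 0 A = 0"
  by (simp add: poly_mat_def)

lemma poly_mat_shift: "A ** poly_mat p A = poly_mat (pCons 0 p) A"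
proof -
  have "A ** poly_mat p A = (\<Sum>i\<le>degree p. coeff p i *\<^sub>R mat_pow A (Suc i))"
    unfolding poly_mat_def linear_sum[OF lin_left]
    by (simp add: msr)
  also have "\<dots> = (\<Sum>i\<le>Suc (degree p). coeff (pCons 0 p) i *\<^sub>R mat_pow A i)"
    by (subst sum.atMost_Suc_shift) simp
  also have "\<dots> = poly_mat (pCons 0 p) A"
    by (rule poly_mat_eq[symmetric]) (simp add: degree_pCons_le)
  finally show ?thesis .
qed

lemma poly_mat_comm: "poly_mat p A ** A = A ** poly_mat p A"
  unfolding poly_mat_def linear_sum[OF lin_left] linear_sum[OF lin_right]
  by (simp add: msr msl mat_pow_comm)

lemma surj_V:
  fixes H :: "real^'n^'n"
  assumes "invertible H"
  shows "\<exists>s. H ** poly_mat s H = poly_mat p H"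
proof -
  define V where "V = range (\<lambda>p. poly_mat p H)"
  have sV: "subspace V"
    unfolding subspace_def V_def
  proof (intro conjI ballI allI)
    show "0 \<in> range (\<lambda>p. poly_mat p H)" by (metis poly_mat_0 rangeI)
  next
    fix x y assume "x \<in> range (\<lambda>p. poly_mat p H)" "y \<in> range (\<lambda>p. poly_mat p H)"
    then obtain a c where "x = poly_mat a H" "y = poly_mat c H" by blast
    then have "x + y = poly_mat (a + c) H" by (simp add: poly_mat_add)
    then show "x + y \<in> range (\<lambda>p. poly_mat p H)" by blast
  next
    fix c x assume "x \<in> range (\<lambda>p. poly_mat p H)"
    then obtain a where "x = poly_mat a H" by blast
    then have "c *\<^sub>R x = poly_mat (smult c a) H" by (simp add: poly_mat_smult)
    then show "c *\<^sub>R x \<in> range (\<lambda>p. poly_mat p H)" by blast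
  qed
  obtain H' where H': "H' ** H = mat 1" using assms invertible_def by blast
  have inj: "inj ((**) H)"
    by (rule injI) (metis H' matrix_mul_assoc matrix_mul_lid)
  have sub: "(\<lambda>M. H ** M) ` V \<subseteq> V"
    unfolding V_def using poly_mat_shift by auto
  have "dim ((\<lambda>M. H ** M) ` V) = dim V"
    by (rule dim_image_eq[OF lin_left]) (use inj in \<open>auto simp: inj_on_def\<close>)
  moreover have "subspace ((\<lambda>M. H ** M) ` V)"
    by (rule linear_subspace_image[OF lin_left sV])
  ultimately have "(\<lambda>M. H ** M) ` V = V"
    using subspace_dim_equal[OF _ sV sub] by simp
  moreover have "poly_mat p H \<in> V" unfolding V_def by simp
  ultimately have "poly_mat p H \<in> (\<lambda>M. H ** M) ` V" by simp
  then obtain s where "poly_mat p H = H ** poly_mat s H" unfolding V_def by blast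
  then show ?thesis by metis
qed

lemma lincomb:
  fixes I A B :: "'a::real_vector" and n :: real
  assumes "n \<ge> 0"
  shows "(1/(n+1)) *\<^sub>R (n *\<^sub>R (2 *\<^sub>R I - A - (I+B)) + (I+B)) = I - (n/(n+1)) *\<^sub>R A - ((n-1)/(n+1)) *\<^sub>R B"
proof -
  define k where "k = 1/(n+1)"
  have k1: "n*k + k = 1" using assms by (simp add: k_def field_simps)
  have e1: "n/(n+1) = n*k" "(n-1)/(n+1) = n*k - k"
    by (simp_all add: k_def diff_divide_distrib)
  have "k *\<^sub>R (n *\<^sub>R (2 *\<^sub>R I - A - (I+B)) + (I+B)) = (n*k + k) *\<^sub>R I - (n*k) *\<^sub>R A - (n*k - k) *\<^sub>R B"
    by (simp add: algebra_simps flip: scaleR_add_left)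
  then show ?thesis unfolding e1 k1 k_def[symmetric] by simp
qed
lemma l1: "(I::'a::real_vector) - (1/2) *\<^sub>R (2 *\<^sub>R I - A) = (1/2) *\<^sub>R A"
  by (simp add: algebra_simps)
lemma l2: "- (I - ((I::'a::real_vector) + B)) = B"
  by (simp add: algebra_simps)

lemma mdiff_r: "((A::real^'n^'n) - B) ** C = A ** C - B ** C"
  by (metis add_diff_cancel diff_add_cancel madd_r)

theorem theorem1:
  fixes H :: "real^'d^'d" and q :: "real^'d"
    and P Q R :: "nat \<Rightarrow> real poly"
  assumes H: "sym_pos_def H"
    and stat: "\<forall>n\<ge>1. matrix_inv H *v q =
        poly_mat (P n) H *v (matrix_inv H *v q) + poly_mat (Q n) H *v (matrix_inv H *v q)
        + poly_mat (R n) H *v q"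
    and scal: "\<exists>A B :: real^'d^'d. \<forall>n\<ge>1.
        poly_mat (P n) H = (real n / (real n + 1)) *\<^sub>R A \<and>
        poly_mat (Q n) H = ((real n - 1) / (real n + 1)) *\<^sub>R B"
  shows "\<exists>Abar Bbar :: real poly. \<forall>n\<ge>1.
        poly_mat (P n) H = (2 * real n / (real n + 1)) *\<^sub>R
            (mat 1 - (1/2) *\<^sub>R ((poly_mat Abar H + poly_mat Bbar H) ** H)) \<and>
        poly_mat (Q n) H = - (((real n - 1) / (real n + 1)) *\<^sub>R (mat 1 - poly_mat Bbar H ** H)) \<and>
        poly_mat (R n) H *v q = (1 / (real n + 1)) *\<^sub>R ((real n *\<^sub>R poly_mat Abar H + poly_mat Bbar H) *v q)"
proof -
  have ker: "\<forall>x. H *v x = 0 \<longrightarrow> x = 0"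
    using H unfolding sym_pos_def_def by (metis inner_zero_right less_irrefl)
  then have inv: "invertible H"
    using matrix_left_invertible_ker invertible_left_inverse by blast
  have HHi: "H ** matrix_inv H = mat 1"
    using inv unfolding invertible_def matrix_inv_def by (rule someI_ex[where P="\<lambda>A'. H ** A' = mat 1 \<and> A' ** H = mat 1", THEN conjunct1])
  define th where "th = matrix_inv H *v q"
  have qth: "q = H *v th"
    unfolding th_def by (simp add: matrix_vector_mul_assoc HHi)
  obtain A B :: "real^'d^'d" where AB: "\<forall>n\<ge>1.
        poly_mat (P n) H = (real n / (real n + 1)) *\<^sub>R A \<and>
        poly_mat (Q n) H = ((real n - 1) / (real n + 1)) *\<^sub>R B"
    using scal by blast
  have Adef: "A = poly_mat (smult 2 (P 1)) H"
    using AB[rule_format, of 1] by (simp add: poly_mat_smult)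
  have Bdef: "B = poly_mat (smult 3 (Q 2)) H"
    using AB[rule_format, of 2] by (simp add: poly_mat_smult)
  obtain b where b: "H ** poly_mat b H = poly_mat (1 + smult 3 (Q 2)) H"
    using surj_V[OF inv] by blast
  obtain s where s: "H ** poly_mat s H = poly_mat (smult 2 1 - smult 2 (P 1)) H"
    using surj_V[OF inv] by blast
  have bH: "poly_mat b H ** H = mat 1 + B"
    using b by (simp add: poly_mat_comm poly_mat_add poly_mat_1 Bdef)
  have sH: "poly_mat s H ** H = 2 *\<^sub>R mat 1 - A"
    using s by (simp add: poly_mat_comm poly_mat_diff poly_mat_smult poly_mat_1 poly_mat_const Adef)
  show ?thesis
  proof (intro exI allI impI conjI)
    fix n :: nat assume n: "n \<ge> 1"
    have Pn: "poly_mat (P n) H = (real n / (real n + 1)) *\<^sub>R A"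
      and Qn: "poly_mat (Q n) H = ((real n - 1) / (real n + 1)) *\<^sub>R B"
      using AB n by auto
    have sb: "poly_mat (s - b) H + poly_mat b H = poly_mat s H"
      by (simp add: poly_mat_diff)
    show "poly_mat (P n) H = (2 * real n / (real n + 1)) *\<^sub>R
            (mat 1 - (1/2) *\<^sub>R ((poly_mat (s - b) H + poly_mat b H) ** H))"
      unfolding sb sH l1 Pn by (simp add: field_simps)
    show "poly_mat (Q n) H = - (((real n - 1) / (real n + 1)) *\<^sub>R (mat 1 - poly_mat b H ** H))"
      unfolding bH Qn by (simp add: algebra_simps)
    have M: "((1 / (real n + 1)) *\<^sub>R (real n *\<^sub>R poly_mat (s - b) H + poly_mat b H)) ** H
        = mat 1 - poly_mat (P n) H - poly_mat (Q n) H"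
      unfolding Pn Qn
      by (simp add: msl madd_r poly_mat_diff mdiff_r sH bH lincomb)
    have "poly_mat (R n) H *v q = th - poly_mat (P n) H *v th - poly_mat (Q n) H *v th"
      using stat n unfolding th_def by (simp add: algebra_simps)
    also have "\<dots> = (mat 1 - poly_mat (P n) H - poly_mat (Q n) H) *v th"
      by (simp add: algebra_simps)
    also have "\<dots> = ((1 / (real n + 1)) *\<^sub>R (real n *\<^sub>R poly_mat (s - b) H + poly_mat b H)) *v q"
      unfolding M[symmetric] qth by (simp add: matrix_vector_mul_assoc)
    finally show "poly_mat (R n) H *v q = (1 / (real n + 1)) *\<^sub>R ((real n *\<^sub>R poly_mat (s - b) H + poly_mat b H) *v q)"
      by (simp add: scaleR_matrix_vector_assoc)
  qed
qed

end
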